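(* For any myopic equilibrium $\mathbf{s}$ of a $k$-round Funding Game with bundle sizes $m^1,\dots,m^k$ and valuation profile $\mathbf{v}$ (with $\Delta^t>0$ for $t=1,\dots,k$), $$sw(OPT^{\mathbf{v}}) \;\le\; sw(\mathbf{s}) + \Delta^{k+1}\cdot\sum_{t=1}^k\left(m^t - \frac{sw(\mathbf{s}^t)}{\Delta^t}\right).$$
   Context: Players $1,\dots,n$ have valuation functions $v_i:\{0,\dots,m\}\to\mathbb{R}_{\ge0}$ with $v_i(0)=0$, nondecreasing, with diminishing marginal returns $v_i(x)-v_i(x-1)\ge v_i(x+1)-v_i(x)$. A (single-round) Funding Game with $M$ items and such valuations $w_i$: each player submits a request $(x_i,\tilde v_i)$ with $x_i\in\{0,\dots,M\}$ and $0\le \tilde v_i\le w_i(x_i)$; the Highest Ratio Greedy mechanism considers requests in descending order of $\tilde v_i/x_i$ (ties in favor of lower index) and grants each in turn $\min(x_i,\text{items still available})$ items; payoff is $w_i$ of the number of items received; a Nash equilibrium is a request profile where no player can increase its payoff by changing its own valid request. A $k$-round Funding Game with bundle sizes $m^1,\dots,m^k$ (positive integers, $\sum_t m^t=m$) consists of rounds $t=1,\dots,k$; in round $t$ a single-round Funding Game $G^t$ is played with $m^t$ items and marginal valuations $v_i^t(x)=v_i(x+\alpha_i^{t-1})-v_i(\alpha_i^{t-1})$, where $X_i^t$ is the number of items player $i$ receives in round $t$ and $\alpha_i^t=\sum_{j\le t}X_i^j$, $\alpha_i^0=0$. $\mathbf{s}^t$ is the request profile in round $t$ and $\mathbf{s}=(\mathbf{s}^1,\dots,\mathbf{s}^k)$.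 $\mathbf{s}$ is a myopic equilibrium if each $\mathbf{s}^t$ is a Nash equilibrium of $G^t$. $sw(\mathbf{s}^t)=\sum_i v_i^t(X_i^t)$, $sw(\mathbf{s})=\sum_i v_i(\alpha_i^k)$, and $\Delta^t=\max_i v_i^t(1)$ for $t=1,\dots,k+1$ (with $v_i^{k+1}(x)=v_i(x+\alpha_i^k)-v_i(\alpha_i^k)$). $sw(OPT^{\mathbf{v}})$ is the maximum of $\sum_i v_i(X_i)$ over allocations with $\sum_i X_i\le m$. *)

theory Defs
  imports Complex_Main "HOL-Library.Product_Lexorder"
begin

(* Players are 0..<n (paper: 1..n; order of indices is preserved).
   A valuation profile is v :: nat => nat => real, v i x = value of player i for x items. *)

definition valuation :: "(nat \<Rightarrow> real) \<Rightarrow> bool" where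
  "valuation f \<longleftrightarrow> f 0 = 0 \<and> mono f \<and>
     (\<forall>x. f (x + 2) - f (x + 1) \<le> f (x + 1) - f x)"

(* ratio of a request (xr, vr): vr / xr  (note: vr / 0 = 0 in Isabelle;
   a request with xr = 0 receives 0 items regardless of its position) *)
definition req_ratio :: "(nat \<Rightarrow> nat) \<Rightarrow> (nat \<Rightarrow> real) \<Rightarrow> nat \<Rightarrow> real" where
  "req_ratio xr vr i = vr i / real (xr i)"

definition hrg_order :: "nat \<Rightarrow> (nat \<Rightarrow> nat) \<Rightarrow> (nat \<Rightarrow> real) \<Rightarrow> nat list" where
  "hrg_order n xr vr = sort_key (\<lambda>i. (- req_ratio xr vr i, i)) [0..<n]"

fun grant :: "nat \<Rightarrow> (nat \<Rightarrow> nat) \<Rightarrow> nat list \<Rightarrow> nat \<Rightarrow> nat" where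
  "grant rem xr [] = (\<lambda>_. 0)"
| "grant rem xr (i # is) = (grant (rem - min (xr i) rem) xr is)(i := min (xr i) rem)"

definition hrg_alloc :: "nat \<Rightarrow> nat \<Rightarrow> (nat \<Rightarrow> nat) \<Rightarrow> (nat \<Rightarrow> real) \<Rightarrow> nat \<Rightarrow> nat" where
  "hrg_alloc n M xr vr = grant M xr (hrg_order n xr vr)"

definition valid_request :: "nat \<Rightarrow> (nat \<Rightarrow> real) \<Rightarrow> nat \<Rightarrow> real \<Rightarrow> bool" where
  "valid_request M wi xi vi \<longleftrightarrow> xi \<le> M \<and> 0 \<le> vi \<and> vi \<le> wi xi"

definition nash_eq :: "nat \<Rightarrow> nat \<Rightarrow> (nat \<Rightarrow> nat \<Rightarrow> real) \<Rightarrow> (nat \<Rightarrow> nat) \<Rightarrow> (nat \<Rightarrow> real) \<Rightarrow> bool" where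
  "nash_eq n M w xr vr \<longleftrightarrow>
     (\<forall>i<n. valid_request M (w i) (xr i) (vr i)) \<and>
     (\<forall>i<n. \<forall>x' v'. valid_request M (w i) x' v' \<longrightarrow>
        w i (hrg_alloc n M (xr(i := x')) (vr(i := v')) i) \<le> w i (hrg_alloc n M xr vr i))"

(* k-round game: bundle sizes mb t (t = 1..k), requests xs t i, vs t i in round t.
   alpha t i = items received by player i in rounds 1..t *)
fun alpha :: "nat \<Rightarrow> (nat \<Rightarrow> nat) \<Rightarrow> (nat \<Rightarrow> nat \<Rightarrow> nat) \<Rightarrow> (nat \<Rightarrow> nat \<Rightarrow> real) \<Rightarrow> nat \<Rightarrow> nat \<Rightarrow> nat" where
  "alpha n mb xs vs 0 = (\<lambda>i. 0)"
| "alpha n mb xs vs (Suc t) =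
     (\<lambda>i. alpha n mb xs vs t i + hrg_alloc n (mb (Suc t)) (xs (Suc t)) (vs (Suc t)) i)"

definition marg_val :: "nat \<Rightarrow> (nat \<Rightarrow> nat) \<Rightarrow> (nat \<Rightarrow> nat \<Rightarrow> nat) \<Rightarrow> (nat \<Rightarrow> nat \<Rightarrow> real)
     \<Rightarrow> (nat \<Rightarrow> nat \<Rightarrow> real) \<Rightarrow> nat \<Rightarrow> nat \<Rightarrow> nat \<Rightarrow> real" where
  "marg_val n mb xs vs v t i x =
     v i (x + alpha n mb xs vs (t - 1) i) - v i (alpha n mb xs vs (t - 1) i)"

definition myopic_eq :: "nat \<Rightarrow> nat \<Rightarrow> (nat \<Rightarrow> nat) \<Rightarrow> (nat \<Rightarrow> nat \<Rightarrow> real)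
     \<Rightarrow> (nat \<Rightarrow> nat \<Rightarrow> nat) \<Rightarrow> (nat \<Rightarrow> nat \<Rightarrow> real) \<Rightarrow> bool" where
  "myopic_eq n k mb v xs vs \<longleftrightarrow>
     (\<forall>t\<in>{1..k}. nash_eq n (mb t) (marg_val n mb xs vs v t) (xs t) (vs t))"

definition sw_round :: "nat \<Rightarrow> (nat \<Rightarrow> nat) \<Rightarrow> (nat \<Rightarrow> nat \<Rightarrow> real)
     \<Rightarrow> (nat \<Rightarrow> nat \<Rightarrow> nat) \<Rightarrow> (nat \<Rightarrow> nat \<Rightarrow> real) \<Rightarrow> nat \<Rightarrow> real" where
  "sw_round n mb v xs vs t =
     (\<Sum>i<n. marg_val n mb xs vs v t i (hrg_alloc n (mb t) (xs t) (vs t) i))"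

definition sw_total :: "nat \<Rightarrow> (nat \<Rightarrow> nat) \<Rightarrow> (nat \<Rightarrow> nat \<Rightarrow> real)
     \<Rightarrow> (nat \<Rightarrow> nat \<Rightarrow> nat) \<Rightarrow> (nat \<Rightarrow> nat \<Rightarrow> real) \<Rightarrow> nat \<Rightarrow> real" where
  "sw_total n mb v xs vs k = (\<Sum>i<n. v i (alpha n mb xs vs k i))"

definition Delta :: "nat \<Rightarrow> (nat \<Rightarrow> nat) \<Rightarrow> (nat \<Rightarrow> nat \<Rightarrow> real)
     \<Rightarrow> (nat \<Rightarrow> nat \<Rightarrow> nat) \<Rightarrow> (nat \<Rightarrow> nat \<Rightarrow> real) \<Rightarrow> nat \<Rightarrow> real" where
  "Delta n mb v xs vs t = Max ((\<lambda>i. marg_val n mb xs vs v t i 1) ` {..<n})"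

definition sw_opt :: "nat \<Rightarrow> nat \<Rightarrow> (nat \<Rightarrow> nat \<Rightarrow> real) \<Rightarrow> real" where
  "sw_opt n m v = Max {(\<Sum>i<n. v i (X i)) | X. (\<Sum>i<n. X i) \<le> m}"

end

theory Submission
  imports Defs "HOL-Library.FuncSet"
begin

lemma val_mono: "valuation f \<Longrightarrow> a \<le> b \<Longrightarrow> f a \<le> f b"
  unfolding valuation_def by (auto dest: monoD)

lemma val_marg_dec:
  assumes "valuation f" shows "a \<le> b \<Longrightarrow> f (b+1) - f b \<le> f (a+1) - f a"
proof (induction b)
  case 0 then show ?case by simp
next
  case (Suc b)
  have c: "f (b + 2) - f (b + 1) \<le> f (b + 1) - f b" using assms unfolding valuation_def by blast
  show ?case
  proof (cases "a = Suc b")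
    case True then show ?thesis by simp
  next
    case False
    then have "a \<le> b" using Suc.prems by simp
    then show ?thesis using Suc.IH c by (simp add: numeral_2_eq_2)
  qed
qed

lemma val_concave:
  assumes "valuation f" shows "f (a+p) - f a \<le> real p * (f (a+1) - f a)"
proof (induction p)
  case 0 then show ?case by simp
next
  case (Suc p)
  have "f (a + p + 1) - f (a + p) \<le> f (a+1) - f a" using val_marg_dec[OF assms, of a "a+p"] by simp
  then show ?case using Suc.IH by (simp add: algebra_simps)
qed

lemma key_ineq:
  fixes w d p Dt D :: real
  assumes "0 \<le> D" "D \<le> Dt" "0 < Dt" "w \<le> p*Dt" "w \<le> d"
  shows "w - D*p \<le> d - D*d/Dt"
proof -
  have r0: "0 \<le> D/Dt" "D/Dt \<le> 1" using assms by auto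
  have eq: "D*d/Dt - D*p = (D/Dt) * (d - p*Dt)" using assms(3) by (simp add: field_simps)
  have "(D/Dt) * (d - p*Dt) \<le> d - w"
  proof (cases "d - p*Dt \<ge> 0")
    case True
    then have "(D/Dt) * (d - p*Dt) \<le> 1 * (d - p*Dt)" using r0 by (intro mult_right_mono) auto
    then show ?thesis using assms by simp
  next
    case False
    then have "(D/Dt) * (d - p*Dt) \<le> 0" using r0 mult_nonneg_nonpos[of "D/Dt" "d - p*Dt"] by linarith
    then show ?thesis using assms by simp
  qed
  then show ?thesis using eq by linarith
qed

lemma player_bound:
  fixes f :: "nat \<Rightarrow> real" and A :: "nat \<Rightarrow> nat" and Dl :: "nat \<Rightarrow> real" and D :: real
  assumes f: "valuation f"
    and A0: "A 0 = 0" and Am: "\<And>t. A t \<le> A (Suc t)"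
    and marg: "\<And>t. t < k \<Longrightarrow> f (A t + 1) - f (A t) \<le> Dl (Suc t)"
    and pos: "\<And>t. t < k \<Longrightarrow> 0 < Dl (Suc t)"
    and Dle: "\<And>t. t < k \<Longrightarrow> D \<le> Dl (Suc t)"
    and D0: "0 \<le> D"
    and Dk: "f (A k + 1) - f (A k) \<le> D"
  shows "f y - D * real y \<le> f (A k) - D * (\<Sum>s<k. (f (A (Suc s)) - f (A s)) / Dl (Suc s))"
proof -
  define F where "F t = f (A t) - D * (\<Sum>s<t. (f (A (Suc s)) - f (A s)) / Dl (Suc s))" for t
  have P: "t \<le> k \<Longrightarrow> (\<forall>y \<le> A t. f y - D * real y \<le> F t)" for t
  proof (induction t)
    case 0
    have "f 0 = 0" using f unfolding valuation_def by blast
    then show ?case using A0 by (simp add: F_def)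
  next
    case (Suc t)
    then have tk: "t < k" by simp
    have IH: "\<forall>y \<le> A t. f y - D * real y \<le> F t" using Suc by simp
    define d where "d = f (A (Suc t)) - f (A t)"
    define Dt where "Dt = Dl (Suc t)"
    have FS: "F (Suc t) = F t + (d - D*d/Dt)"
      unfolding F_def d_def Dt_def by (simp add: algebra_simps)
    have d0: "0 \<le> d" unfolding d_def using val_mono[OF f Am] by simp
    have Dt0: "0 < Dt" "D \<le> Dt" using pos[OF tk] Dle[OF tk] by (auto simp: Dt_def)
    have "D*d/Dt \<le> d"
    proof -
      have "D*d/Dt = (D/Dt)*d" by simp
      also have "\<dots> \<le> 1 * d" using Dt0 d0 by (intro mult_right_mono) auto
      finally show ?thesis by simp
    qed
    then have Fm: "F t \<le> F (Suc t)" using FS by simp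
    show ?case
    proof (intro allI impI)
      fix y assume y: "y \<le> A (Suc t)"
      show "f y - D * real y \<le> F (Suc t)"
      proof (cases "y \<le> A t")
        case True then show ?thesis using IH Fm by force
      next
        case False
        then obtain p where yp: "y = A t + p" by (metis le_add_diff_inverse nat_le_linear)
        define w where "w = f (A t + p) - f (A t)"
        have w1: "w \<le> real p * Dt"
        proof -
          have "w \<le> real p * (f (A t + 1) - f (A t))" unfolding w_def by (rule val_concave[OF f])
          also have "\<dots> \<le> real p * Dt" using marg[OF tk] by (intro mult_left_mono) (auto simp: Dt_def)
          finally show ?thesis .
        qed
        have w2: "w \<le> d" unfolding w_def d_def using val_mono[OF f y] yp by simp
        have k: "w - D * real p \<le> d - D*d/Dt" using key_ineq[OF D0 Dt0(2) Dt0(1) w1 w2] .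
        have "f (A t) - D * real (A t) \<le> F t" using IH by simp
        then show ?thesis using k FS yp unfolding w_def by (simp add: algebra_simps)
      qed
    qed
  qed
  have Pk: "\<forall>y \<le> A k. f y - D * real y \<le> F k" using P by simp
  show ?thesis
  proof (cases "y \<le> A k")
    case True then show ?thesis using Pk by (simp add: F_def)
  next
    case False
    then obtain p where yp: "y = A k + p" by (metis le_add_diff_inverse nat_le_linear)
    have "f y - f (A k) \<le> real p * (f (A k + 1) - f (A k))" using val_concave[OF f] yp by simp
    also have "\<dots> \<le> real p * D" using Dk by (intro mult_left_mono) auto
    finally have "f y - D * real y \<le> f (A k) - D * real (A k)" using yp by (simp add: algebra_simps)
    moreover have "f (A k) - D * real (A k) \<le> F k" using Pk by simp
    ultimately show ?thesis by (simp add: F_def)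
  qed
qed


lemma alpha_mono: "t \<le> k \<Longrightarrow> alpha n mb xs vs t i \<le> alpha n mb xs vs k i"
  by (induction k) (auto simp: le_Suc_eq)

lemma sum_shift1: "(\<Sum>t=1..k. h t) = (\<Sum>s<k. h (Suc s) :: real)"
  by (induction k) (auto simp: atLeastAtMostSuc_conv)

theorem lemma2:
  fixes n k m :: nat and mb :: "nat \<Rightarrow> nat" and v :: "nat \<Rightarrow> nat \<Rightarrow> real"
    and xs :: "nat \<Rightarrow> nat \<Rightarrow> nat" and vs :: "nat \<Rightarrow> nat \<Rightarrow> real"
  assumes "n \<ge> 1"
    and "\<forall>i<n. valuation (v i)"
    and "\<forall>t\<in>{1..k}. mb t > 0"
    and "(\<Sum>t=1..k. mb t) = m"
    and "myopic_eq n k mb v xs vs"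
    and "\<forall>t\<in>{1..k}. Delta n mb v xs vs t > 0"
  shows "sw_opt n m v \<le> sw_total n mb v xs vs k
           + Delta n mb v xs vs (k + 1)
             * (\<Sum>t=1..k. real (mb t) - sw_round n mb v xs vs t / Delta n mb v xs vs t)"
proof -
  note val = assms(2)
  define a where "a = alpha n mb xs vs"
  define Dl where "Dl = Delta n mb v xs vs"
  define D where "D = Dl (k+1)"
  have DlS: "Dl (Suc t) = Max ((\<lambda>i. v i (a t i + 1) - v i (a t i)) ` {..<n})" for t
    unfolding Dl_def Delta_def marg_val_def a_def by (simp add: add.commute)
  have ne: "{..<n} \<noteq> {}" using assms(1) by (simp add: lessThan_empty_iff)
  have margle: "i < n \<Longrightarrow> v i (a t i + 1) - v i (a t i) \<le> Dl (Suc t)" for i t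
    unfolding DlS by (rule Max_ge) auto
  obtain i0 where i0: "i0 < n" "D = v i0 (a k i0 + 1) - v i0 (a k i0)"
  proof -
    have "D \<in> (\<lambda>i. v i (a k i + 1) - v i (a k i)) ` {..<n}"
      unfolding D_def using DlS[of k] Max_in[of "(\<lambda>i. v i (a k i + 1) - v i (a k i)) ` {..<n}"] ne
      by simp
    then show ?thesis using that by auto
  qed
  have D0: "0 \<le> D" using i0 val_mono[of "v i0" "a k i0" "a k i0 + 1"] val by simp
  have Dle: "t < k \<Longrightarrow> D \<le> Dl (Suc t)" for t
  proof -
    assume "t < k"
    then have "a t i0 \<le> a k i0" unfolding a_def by (intro alpha_mono) simp
    then have "D \<le> v i0 (a t i0 + 1) - v i0 (a t i0)"
      using i0 val_marg_dec[of "v i0" "a t i0" "a k i0"] val by simp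
    then show ?thesis using margle[OF i0(1), of t] by simp
  qed
  have pos: "t < k \<Longrightarrow> 0 < Dl (Suc t)" for t using assms(6) unfolding Dl_def by auto
  define G where "G i s = (v i (a (Suc s) i) - v i (a s i)) / Dl (Suc s)" for i s
  have pb: "i < n \<Longrightarrow> v i y - D * real y \<le> v i (a k i) - D * (\<Sum>s<k. G i s)" for i y
    unfolding G_def
    apply (rule player_bound[where A="\<lambda>t. a t i" and f="v i"])
    using val margle pos Dle D0 by (auto simp: a_def D_def intro: margle[unfolded a_def D_def])
  have swr: "sw_round n mb v xs vs (Suc s) / Dl (Suc s) = (\<Sum>i<n. G i s)" for s
    unfolding sw_round_def marg_val_def G_def a_def
    by (simp add: sum_divide_distrib add.commute)
  have RHS: "sw_total n mb v xs vs k + Dl (k + 1) * (\<Sum>t=1..k. real (mb t) - sw_round n mb v xs vs t / Dl t)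
     = (\<Sum>i<n. v i (a k i) - D * (\<Sum>s<k. G i s)) + D * real m"
  proof -
    have "(\<Sum>t=1..k. real (mb t) - sw_round n mb v xs vs t / Dl t)
        = real m - (\<Sum>s<k. \<Sum>i<n. G i s)"
    proof -
      have h1: "(\<Sum>t=1..k. sw_round n mb v xs vs t / Dl t) = (\<Sum>s<k. \<Sum>i<n. G i s)"
        using sum_shift1[of "\<lambda>t. sw_round n mb v xs vs t / Dl t"] swr by simp
      have h2: "(\<Sum>t=1..k. real (mb t)) = real m" using assms(4) by (simp flip: of_nat_sum)
      show ?thesis using h1 h2 by (simp add: sum_subtractf)
    qed
    also have "(\<Sum>s<k. \<Sum>i<n. G i s) = (\<Sum>i<n. \<Sum>s<k. G i s)" by (rule sum.swap)
    finally have E: "(\<Sum>t=1..k. real (mb t) - sw_round n mb v xs vs t / Dl t)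
        = real m - (\<Sum>i<n. \<Sum>s<k. G i s)" .
    have "(\<Sum>i<n. v i (a k i) - D * (\<Sum>s<k. G i s)) = (\<Sum>i<n. v i (a k i)) - D * (\<Sum>i<n. \<Sum>s<k. G i s)"
      by (simp add: sum_subtractf sum_distrib_left)
    then show ?thesis unfolding E sw_total_def a_def[symmetric] D_def[symmetric]
      by (simp add: algebra_simps)
  qed
  define S where "S = {(\<Sum>i<n. v i (X i)) | X. (\<Sum>i<n. X i) \<le> m}"
  have fin: "finite S"
  proof -
    have "S \<subseteq> (\<lambda>X. \<Sum>i<n. v i (X i)) ` (PiE {..<n} (\<lambda>_. {..m}))"
    proof
      fix z assume "z \<in> S"
      then obtain X where X: "z = (\<Sum>i<n. v i (X i))" "(\<Sum>i<n. X i) \<le> m" unfolding S_def by auto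
      have "restrict X {..<n} \<in> PiE {..<n} (\<lambda>_. {..m})"
      proof -
        have "i < n \<Longrightarrow> X i \<le> m" for i
          using member_le_sum[of i "{..<n}" X] X(2) by simp
        then show ?thesis by auto
      qed
      moreover have "z = (\<Sum>i<n. v i (restrict X {..<n} i))" using X(1) by simp
      ultimately show "z \<in> (\<lambda>X. \<Sum>i<n. v i (X i)) ` (PiE {..<n} (\<lambda>_. {..m}))" by blast
    qed
    then show ?thesis by (rule finite_subset) (intro finite_imageI finite_PiE; simp)
  qed
  have "(0::real) \<in> S" unfolding S_def
    using val unfolding valuation_def by (intro CollectI exI[of _ "\<lambda>_. 0"]) auto
  then have Sne: "S \<noteq> {}" by auto
  have "Max S \<le> (\<Sum>i<n. v i (a k i) - D * (\<Sum>s<k. G i s)) + D * real m"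
  proof (rule Max.boundedI[OF fin Sne])
    fix z assume "z \<in> S"
    then obtain X where X: "z = (\<Sum>i<n. v i (X i))" "(\<Sum>i<n. X i) \<le> m" unfolding S_def by auto
    have "z \<le> (\<Sum>i<n. v i (a k i) - D * (\<Sum>s<k. G i s) + D * real (X i))"
      unfolding X(1)
    proof (rule sum_mono)
      fix i assume "i \<in> {..<n}"
      then show "v i (X i) \<le> v i (a k i) - D * (\<Sum>s<k. G i s) + D * real (X i)"
        using pb[of i "X i"] by simp
    qed
    also have "\<dots> = (\<Sum>i<n. v i (a k i) - D * (\<Sum>s<k. G i s)) + D * real (\<Sum>i<n. X i)"
      by (simp add: sum.distrib sum_distrib_left)
    also have "\<dots> \<le> (\<Sum>i<n. v i (a k i) - D * (\<Sum>s<k. G i s)) + D * real m"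
    proof -
      have "real (\<Sum>i<n. X i) \<le> real m" using X(2) by (simp only: of_nat_le_iff)
      then have "D * real (\<Sum>i<n. X i) \<le> D * real m" using D0 by (rule mult_left_mono)
      then show ?thesis by linarith
    qed
    finally show "z \<le> \<dots>" .
  qed
  then show ?thesis using RHS unfolding sw_opt_def S_def[symmetric] Dl_def by simp
qed

end
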